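(* Let $\theta=\tilde p/p$ be a rational inner function on $\mathbb{D}^2$ of degree $(1,1)$ with $p(z)=a+bz_1+cz_2+dz_1z_2$, and assume $p$ vanishes at $\tau=(\tau_1,\tau_2)\in\mathbb{T}^2$. Let $\lambda$ satisfy $\lambda^2=\bar ac-d\bar b$ and let $f(z)=\frac{\lambda(z_2-\tau_2)}{p(z)}$. Then \[(M_{z_1}^*f)(z)=f(z)\Big(-\frac{b+dz_2}{a+cz_2}\Big),\qquad (M_{z_1}^*\theta)(z)=f(z)\,\lambda\Big(\frac{z_2-\tau_2}{a+cz_2}\Big).\]
   Context: $\mathbb{D}$ is the open unit disk, $\mathbb{T}$ the unit circle. A rational inner function of degree $(1,1)$ can be written $\theta=\tilde p/p$ with $p$ a polynomial of degree at most one in each variable with no zeros on $\mathbb{D}^2$ and $\tilde p(z)=\bar az_1z_2+\bar bz_2+\bar cz_1+\bar d$, $p,\tilde p$ coprime. $M_{z_1}^*$ denotes the adjoint of multiplication by $z_1$ on the Hardy space $H^2(\mathbb{D}^2)$ (the backward shift in $z_1$: $(M_{z_1}^*F)(z)=(F(z)-F(0,z_2))/z_1$). *)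

theory Defs
  imports "HOL-Analysis.Analysis"
begin

definition bidisc :: "(complex \<times> complex) set" where
  "bidisc = {z. norm (fst z) < 1 \<and> norm (snd z) < 1}"

definition torus2 :: "(complex \<times> complex) set" where
  "torus2 = {z. norm (fst z) = 1 \<and> norm (snd z) = 1}"

definition p11 :: "complex \<Rightarrow> complex \<Rightarrow> complex \<Rightarrow> complex \<Rightarrow> complex \<times> complex \<Rightarrow> complex" where
  "p11 a b c d z = a + b * fst z + c * snd z + d * fst z * snd z"

definition p11_tilde :: "complex \<Rightarrow> complex \<Rightarrow> complex \<Rightarrow> complex \<Rightarrow> complex \<times> complex \<Rightarrow> complex" where
  "p11_tilde a b c d z = cnj a * fst z * snd z + cnj b * snd z + cnj c * fst z + cnj d"

definition bipoly11 :: "(complex \<times> complex \<Rightarrow> complex) \<Rightarrow> bool" where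
  "bipoly11 q \<longleftrightarrow> (\<exists>\<alpha> \<beta> \<gamma> \<delta>. \<forall>z. q z = \<alpha> + \<beta> * fst z + \<gamma> * snd z + \<delta> * fst z * snd z)"

text \<open>Coprimality of two polynomials of bidegree at most (1,1): every common
  polynomial factor is constant. (Any polynomial factor of a nonzero polynomial
  of bidegree at most (1,1) itself has bidegree at most (1,1), and so does the cofactor.)\<close>

definition coprime11 :: "(complex \<times> complex \<Rightarrow> complex) \<Rightarrow> (complex \<times> complex \<Rightarrow> complex) \<Rightarrow> bool" where
  "coprime11 P Q \<longleftrightarrow>
     (\<forall>q r s. bipoly11 q \<and> bipoly11 r \<and> bipoly11 s \<and>
        (\<forall>z. P z = q z * r z) \<and> (\<forall>z. Q z = q z * s z) \<longrightarrow> (\<exists>k. \<forall>z. q z = k))"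

text \<open>Backward shift in z1: (M_{z1}^* F)(z) = (F(z) - F(0,z2))/z1, extended to
  z1 = 0 by its (removable) value, the z1-derivative of F at (0,z2).\<close>

definition bshift1 :: "(complex \<times> complex \<Rightarrow> complex) \<Rightarrow> complex \<times> complex \<Rightarrow> complex" where
  "bshift1 F z = (if fst z = 0 then deriv (\<lambda>w. F (w, snd z)) 0
                  else (F z - F (0, snd z)) / fst z)"

end

theory Submission imports Defs begin

lemma bound_ineq:
  fixes a b c d w :: complex
  assumes nozero: "\<forall>z\<in>bidisc. p11 a b c d z \<noteq> 0" and w: "norm w = 1"
  shows "norm (b + d*w) \<le> norm (a + c*w)"
proof (rule ccontr)
  assume "\<not> ?thesis"
  hence pos: "norm (b + d*w) - norm (a + c*w) > 0" by simp
  have lim: "((\<lambda>r::real. norm (b + d*(of_real r*w)) - norm (a + c*(of_real r*w))) \<longlongrightarrow> norm (b + d*w) - norm (a + c*w)) (at_left 1)"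
  proof -
    have "((\<lambda>r::real. norm (b + d*(of_real r*w)) - norm (a + c*(of_real r*w))) \<longlongrightarrow> norm (b + d*(of_real 1*w)) - norm (a + c*(of_real 1*w))) (at_left 1)"
      by (intro tendsto_intros tendsto_ident_at)
    thus ?thesis by simp
  qed
  have ev: "eventually (\<lambda>r. norm (b + d*(of_real r*w)) - norm (a + c*(of_real r*w)) > 0 \<and> r \<in> {0<..<1}) (at_left (1::real))"
    using order_tendstoD(1)[OF lim pos] eventually_at_left_real[of 0 1] by (auto elim: eventually_mono intro: eventually_conj)
  then obtain r where r: "norm (b + d*(of_real r*w)) - norm (a + c*(of_real r*w)) > 0" "0 < r" "r < 1"
    using eventually_happens[OF ev] by auto
  define y where "y = of_real r * w"
  define x where "x = - (a + c*y) / (b + d*y)"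
  have Bnz: "b + d*y \<noteq> 0" using r(1) unfolding y_def by auto
  have ny: "norm y < 1" using r w unfolding y_def by (simp add: norm_mult)
  have "norm (a + c*y) < norm (b + d*y)" using r(1) unfolding y_def by simp
  hence nx: "norm x < 1" using Bnz unfolding x_def by (simp add: norm_divide divide_less_eq norm_minus_cancel[of "a + c*y", symmetric] del: norm_minus_cancel)
  have "(x, y) \<in> bidisc" using nx ny by (simp add: bidisc_def)
  moreover have "p11 a b c d (x, y) = 0" using Bnz unfolding p11_def x_def by (simp add: field_simps)
  ultimately show False using nozero by blast
qed

lemma key_identity:
  fixes a b c d :: complex and \<tau> :: "complex \<times> complex"
  assumes nozero: "\<forall>z\<in>bidisc. p11 a b c d z \<noteq> 0"
    and tau: "\<tau> \<in> torus2" and ptau: "p11 a b c d \<tau> = 0"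
  shows "(cnj a * y + cnj c) * (a + c*y) - (cnj b * y + cnj d) * (b + d*y)
         = (cnj a * c - d * cnj b) * (y - snd \<tau>)^2"
proof -
  define t where "t = snd \<tau>"
  define s where "s = fst \<tau>"
  define \<beta> where "\<beta> = a*cnj a + c*cnj c - b*cnj b - d*cnj d"
  define \<gamma> where "\<gamma> = cnj a * c - d * cnj b"
  have nt: "norm t = 1" and ns: "norm s = 1" using tau by (auto simp: torus2_def t_def s_def)
  have Imb: "Im \<beta> = 0" unfolding \<beta>_def by simp
  have Dform: "Re \<beta> + 2 * Re (\<gamma> * w) = (norm (a + c*w))^2 - (norm (b + d*w))^2" if "norm w = 1" for w
  proof -
    have ww: "w * cnj w = 1" using that complex_norm_square[of w] by simp
    have "(a + c*w) * cnj (a + c*w) - (b + d*w) * cnj (b + d*w) = \<beta> + \<gamma> * w + cnj \<gamma> * cnj w"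
      unfolding \<beta>_def \<gamma>_def
      by (simp add: algebra_simps) (simp add: ww mult.assoc[symmetric] mult.commute mult.left_commute ww[simplified mult.commute])
    moreover have "(a + c*w) * cnj (a + c*w) = of_real ((norm (a+c*w))^2)" by (simp only: complex_norm_square)
    moreover have "(b + d*w) * cnj (b + d*w) = of_real ((norm (b+d*w))^2)" by (simp only: complex_norm_square)
    ultimately have "of_real ((norm (a+c*w))^2 - (norm (b+d*w))^2) = \<beta> + \<gamma> * w + cnj \<gamma> * cnj w" by simp
    hence "Re (of_real ((norm (a+c*w))^2 - (norm (b+d*w))^2)) = Re (\<beta> + \<gamma> * w + cnj \<gamma> * cnj w)" by (rule arg_cong)
    thus ?thesis by (simp del: of_real_power of_real_diff)
  qed
  have Dnn: "Re \<beta> + 2 * Re (\<gamma> * w) \<ge> 0" if "norm w = 1" for w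
    using Dform[OF that] bound_ineq[OF nozero that] by (simp add: power_mono)
  have "a + c*t + (b + d*t) * s = 0" using ptau unfolding p11_def t_def s_def
    by (simp add: algebra_simps)
  hence "a + c*t = - ((b + d*t) * s)" by (simp only: eq_neg_iff_add_eq_0)
  hence "norm (a + c*t) = norm (b + d*t)" using ns by (simp add: norm_mult)
  hence D0: "Re \<beta> + 2 * Re (\<gamma> * t) = 0" using Dform[OF nt] by simp
  have gt: "\<gamma> * t = - of_real (norm \<gamma>) \<and> \<beta> = 2 * of_real (norm \<gamma>)"
  proof (cases "\<gamma> = 0")
    case True
    then show ?thesis using D0 Imb by (simp add: complex_eq_iff)
  next
    case False
    define w0 where "w0 = - cnj \<gamma> / of_real (norm \<gamma>)"
    have nw0: "norm w0 = 1" using False by (simp add: w0_def norm_divide)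
    have "\<gamma> * w0 = - of_real (norm \<gamma>)" using False unfolding w0_def
      by (simp add: complex_norm_square[symmetric] power2_eq_square field_simps del: of_real_mult) (simp only: of_real_mult)
    hence "Re \<beta> \<ge> 2 * norm \<gamma>" using Dnn[OF nw0] by simp
    moreover have "- Re (\<gamma> * t) \<le> norm \<gamma>"
      using abs_Re_le_cmod[of "\<gamma> * t"] nt by (simp add: norm_mult)
    ultimately have R: "Re (\<gamma> * t) = - norm \<gamma>" using D0 by linarith
    hence "(Im (\<gamma> * t))^2 = 0" using cmod_power2[of "\<gamma> * t"] nt by (simp add: norm_mult)
    hence "Im (\<gamma> * t) = 0" by simp
    with R have "\<gamma> * t = - of_real (norm \<gamma>)" by (simp add: complex_eq_iff)
    moreover have "\<beta> = 2 * of_real (norm \<gamma>)" using R D0 Imb by (simp add: complex_eq_iff)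
    ultimately show ?thesis by simp
  qed
  have tt: "cnj t * t = 1" using nt complex_norm_square[of t] by (simp add: mult.commute)
  have "cnj (\<gamma> * t) = \<gamma> * t" using gt by simp
  hence "cnj \<gamma> * cnj t * t = \<gamma> * t * t" by simp
  hence cg: "cnj \<gamma> = \<gamma> * t^2" using tt by (simp add: mult.assoc power2_eq_square)
  have b2: "\<beta> = - 2 * \<gamma> * t" using gt by simp
  have "(cnj a * y + cnj c) * (a + c*y) - (cnj b * y + cnj d) * (b + d*y) = \<gamma> * y^2 + \<beta> * y + cnj \<gamma>"
    unfolding \<beta>_def \<gamma>_def by (simp add: algebra_simps power2_eq_square)
  also have "\<dots> = \<gamma> * (y - t)^2" unfolding cg b2 by (simp add: algebra_simps power2_eq_square)
  finally show ?thesis unfolding \<gamma>_def t_def .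
qed



lemma gen1:
  fixes K A' B' D x :: complex
  assumes "D \<noteq> 0" "A' \<noteq> 0" "D = A' + x * B'" "x \<noteq> 0"
  shows "(K / D - K / A') / x = K / D * (- B' / A')"
proof -
  have "(K / D - K / A') / x = (K * A' - K * D) / (D * A' * x)" using assms by (simp add: field_simps)
  also have "K * A' - K * D = (- K * B') * x" using assms by (simp add: algebra_simps)
  also have "(- K * B') * x / (D * A' * x) = (- K * B') / (D * A')" using assms by simp
  also have "\<dots> = K / D * (- B' / A')" by simp
  finally show ?thesis .
qed

lemma gen2:
  fixes T T0 U A' B' D x :: complex
  assumes "D \<noteq> 0" "A' \<noteq> 0" "D = A' + x * B'" "x \<noteq> 0" "T = T0 + x * U"
  shows "(T / D - T0 / A') / x = (U * A' - T0 * B') / (D * A')"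
proof -
  have "(T / D - T0 / A') / x = (T * A' - T0 * D) / (D * A' * x)" using assms(1,2,4) by (simp add: field_simps)
  also have "T * A' - T0 * D = (U * A' - T0 * B') * x" using assms by (simp add: algebra_simps)
  also have "(U * A' - T0 * B') * x / (D * A' * x) = (U * A' - T0 * B') / (D * A')" using assms by simp
  finally show ?thesis .
qed

theorem lemma4p2:
  fixes a b c d lam :: complex and \<tau> :: "complex \<times> complex"
    and \<theta> f :: "complex \<times> complex \<Rightarrow> complex"
  assumes nozero: "\<forall>z\<in>bidisc. p11 a b c d z \<noteq> 0"
    and coprime: "coprime11 (p11 a b c d) (p11_tilde a b c d)"
    and deg11: "(a \<noteq> 0 \<or> c \<noteq> 0) \<and> (a \<noteq> 0 \<or> b \<noteq> 0)"
    and theta_def: "\<theta> = (\<lambda>z. p11_tilde a b c d z / p11 a b c d z)"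
    and tau: "\<tau> \<in> torus2" and ptau: "p11 a b c d \<tau> = 0"
    and lam_sq: "lam^2 = cnj a * c - d * cnj b"
    and f_def: "f = (\<lambda>z. lam * (snd z - snd \<tau>) / p11 a b c d z)"
  shows "(\<forall>z\<in>bidisc. bshift1 f z = f z * (- (b + d * snd z) / (a + c * snd z))) \<and>
         (\<forall>z\<in>bidisc. bshift1 \<theta> z = f z * lam * ((snd z - snd \<tau>) / (a + c * snd z)))"
proof -
  define t where "t = snd \<tau>"
  have main: "bshift1 f (x, y) = f (x, y) * (- (b + d * y) / (a + c * y)) \<and>
      bshift1 \<theta> (x, y) = f (x, y) * lam * ((y - t) / (a + c * y))" if z: "(x, y) \<in> bidisc" for x y
  proof -
    define A where "A = a + c*y"
    define B where "B = b + d*y"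
    define D where "D = A + x * B"
    define T0 where "T0 = cnj b * y + cnj d"
    define U where "U = cnj a * y + cnj c"
    have "(0, y) \<in> bidisc" using z by (simp add: bidisc_def)
    hence A: "A \<noteq> 0" using nozero by (auto simp: p11_def A_def)
    have pD: "p11 a b c d (w, y) = A + w * B" for w unfolding p11_def A_def B_def by (simp add: algebra_simps)
    have tD: "p11_tilde a b c d (w, y) = T0 + w * U" for w unfolding p11_tilde_def T0_def U_def by (simp add: algebra_simps)
    have D: "D \<noteq> 0" using nozero z pD[of x] by (auto simp: D_def)
    have N: "U * A - T0 * B = lam^2 * (y - t)^2"
      using key_identity[OF nozero tau ptau, of y] lam_sq by (simp add: t_def U_def A_def T0_def B_def)
    have fw: "f (w, y) = lam * (y - t) / (A + w * B)" for w unfolding f_def pD t_def by simp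
    have thw: "\<theta> (w, y) = (T0 + w * U) / (A + w * B)" for w unfolding theta_def pD tD by simp
    have RHS2: "f (x, y) * lam * ((y - t) / A) = lam^2 * (y - t)^2 / (D * A)"
      unfolding fw D_def[symmetric] by (simp add: power2_eq_square)
    show ?thesis unfolding A_def[symmetric] B_def[symmetric] RHS2
    proof (cases "x = 0")
      case False
      have bs: "bshift1 f (x,y) = (f (x,y) - f (0,y)) / x" using False by (simp add: bshift1_def)
      have bt: "bshift1 \<theta> (x,y) = (\<theta> (x,y) - \<theta> (0,y)) / x" using False by (simp add: bshift1_def)
      have 1: "bshift1 f (x, y) = f (x, y) * (- B / A)"
        unfolding bs fw D_def[symmetric] by (simp add: gen1[OF D A D_def False])
      have 2: "bshift1 \<theta> (x, y) = lam^2 * (y - t)^2 / (D * A)"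
        unfolding bt thw D_def[symmetric] N[symmetric] by (simp add: gen2[OF D A D_def False refl])
      show "bshift1 f (x, y) = f (x, y) * (- B / A) \<and> bshift1 \<theta> (x, y) = lam^2 * (y - t)^2 / (D * A)"
        using 1 2 by simp
    next
      case True
      have g: "((\<lambda>w. A + w * B) has_field_derivative B) (at 0)"
        by (auto intro!: derivative_eq_intros)
      have k: "((\<lambda>w. lam * (y - t)) has_field_derivative 0) (at 0)" by (rule DERIV_const)
      have h: "((\<lambda>w. T0 + w * U) has_field_derivative U) (at 0)"
        by (auto intro!: derivative_eq_intros)
      have d1: "((\<lambda>w. lam * (y - t) / (A + w * B)) has_field_derivative
          (- lam * (y - t) * B / A^2)) (at 0)"
        using DERIV_divide[OF k g] A by (simp add: power2_eq_square)
      have d2: "((\<lambda>w. (T0 + w * U) / (A + w * B)) has_field_derivative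
          ((U * A - T0 * B) / A^2)) (at 0)"
        using DERIV_divide[OF h g] A by (simp add: power2_eq_square)
      have e1: "bshift1 f (x, y) = deriv (\<lambda>w. lam * (y - t) / (A + w * B)) 0"
        using True by (simp add: bshift1_def fw)
      have e2: "bshift1 \<theta> (x, y) = deriv (\<lambda>w. (T0 + w * U) / (A + w * B)) 0"
        using True by (simp add: bshift1_def thw)
      have 1: "bshift1 f (x, y) = f (x, y) * (- B / A)"
        unfolding e1 DERIV_imp_deriv[OF d1] fw using True A by (simp add: power2_eq_square)
      have 2: "bshift1 \<theta> (x, y) = lam^2 * (y - t)^2 / (D * A)"
        unfolding e2 DERIV_imp_deriv[OF d2] N D_def using True by (simp add: power2_eq_square)
      show "bshift1 f (x, y) = f (x, y) * (- B / A) \<and> bshift1 \<theta> (x, y) = lam^2 * (y - t)^2 / (D * A)"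
        using 1 2 by simp
    qed
  qed
  show ?thesis
  proof (intro conjI ballI)
    fix z assume "z \<in> bidisc"
    then obtain x y where zz: "z = (x, y)" "(x, y) \<in> bidisc" by (cases z) auto
    show "bshift1 f z = f z * (- (b + d * snd z) / (a + c * snd z))" using main[OF zz(2)] zz(1) by simp
  next
    fix z assume "z \<in> bidisc"
    then obtain x y where zz: "z = (x, y)" "(x, y) \<in> bidisc" by (cases z) auto
    show "bshift1 \<theta> z = f z * lam * ((snd z - snd \<tau>) / (a + c * snd z))" using main[OF zz(2)] zz(1) by (simp add: t_def)
  qed
qed

end
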